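(* Let $(X,\mu),(Y,\nu)$ be $\sigma$-finite measure spaces and $\varphi\colon\mathcal B(X,\mu)\to\mathcal B(Y,\nu)$ a conformal homomorphism. Then for every $k\in\mathbb N$ and $\varepsilon>0$ there is $\delta>0$ such that for every family $A_1,\dots,A_k$ of measurable subsets of $X$ with $\mu(A_i)\le\delta$ there exists $\lambda>0$ with $|\mu(A_i\cap A_j)-\lambda\nu(\varphi(A_i)\cap\varphi(A_j))|\le\varepsilon\max_{l=1,\dots,k}\mu(A_l)$ for all $i,j=1,\dots,k$.
   Context: A map $\varphi\colon\mathcal B(X,\mu)\to\mathcal B(Y,\nu)$ between measurable sets is a conformal homomorphism if for every $\varepsilon>0$ there is $\delta>0$ such that for all measurable $U,V\subset X$ with $\mu(U),\mu(V)\le\delta$ there is $\lambda>0$ with $|\mu(U)-\lambda\nu(\varphi U)|,\ |\mu(V)-\lambda\nu(\varphi V)|,\ |\mu(U\cap V)-\lambda\nu(\varphi U\cap\varphi V)|$ all at most $\varepsilon\max\{\mu(U),\mu(V)\}$. *)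

theory Defs
  imports "HOL-Analysis.Analysis"
begin

text \<open>Measures are taken as extended reals so that infinite values are handled
  faithfully: a finite quantity minus an infinite one has infinite absolute value.\<close>

definition emeas :: "'a measure \<Rightarrow> 'a set \<Rightarrow> ereal" where
  "emeas M A = enn2ereal (emeasure M A)"

definition conformal_hom :: "'a measure \<Rightarrow> 'b measure \<Rightarrow> ('a set \<Rightarrow> 'b set) \<Rightarrow> bool" where
  "conformal_hom M N \<phi> \<longleftrightarrow>
     (\<forall>U\<in>sets M. \<phi> U \<in> sets N) \<and>
     (\<forall>\<epsilon>::real>0. \<exists>\<delta>::real>0. \<forall>U\<in>sets M. \<forall>V\<in>sets M.
        emeas M U \<le> ereal \<delta> \<longrightarrow> emeas M V \<le> ereal \<delta> \<longrightarrow>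
        (\<exists>c::real>0.
           \<bar>emeas M U - ereal c * emeas N (\<phi> U)\<bar> \<le> ereal \<epsilon> * max (emeas M U) (emeas M V) \<and>
           \<bar>emeas M V - ereal c * emeas N (\<phi> V)\<bar> \<le> ereal \<epsilon> * max (emeas M U) (emeas M V) \<and>
           \<bar>emeas M (U \<inter> V) - ereal c * emeas N (\<phi> U \<inter> \<phi> V)\<bar>
              \<le> ereal \<epsilon> * max (emeas M U) (emeas M V)))"

end

theory Submission
  imports Defs
begin

lemma core:
  fixes m a w x z P c0 c1 c3 e \<epsilon> :: real
  assumes pos: "0 \<le> m" "0 \<le> x" "0 \<le> z" "0 \<le> P" "c1 > 0" "e > 0" "e \<le> \<epsilon>/20" "e \<le> 1/2"
    and am: "a \<le> m" and zx: "z \<le> x"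
    and h0: "\<bar>m - c0 * P\<bar> \<le> e * m" and h1: "\<bar>m - c1 * P\<bar> \<le> e * m"
    and h2: "\<bar>a - c1 * x\<bar> \<le> e * m" and h3: "\<bar>a - c3 * x\<bar> \<le> e * m"
    and h4: "\<bar>w - c3 * z\<bar> \<le> e * m"
  shows "\<bar>w - c0 * z\<bar> \<le> \<epsilon> * m"
proof -
  have "c1 * x \<le> m + e * m" using h2 am by linarith
  moreover have "(1 - e) * m \<le> c1 * P" using h1 by (simp add: algebra_simps abs_le_iff)
  ultimately have "c1 * ((1 - e) * x) \<le> c1 * ((1 + e) * P)"
  proof -
    assume a1: "c1 * x \<le> m + e * m" and a2: "(1 - e) * m \<le> c1 * P"
    have "(1 - e) * (c1 * x) \<le> (1 - e) * (m + e * m)" using a1 pos by (intro mult_left_mono) auto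
    also have "\<dots> = (1 + e) * ((1 - e) * m)" by (simp add: algebra_simps)
    also have "\<dots> \<le> (1 + e) * (c1 * P)" using a2 pos by (intro mult_left_mono) auto
    finally show ?thesis by (simp add: algebra_simps)
  qed
  hence hx: "(1 - e) * x \<le> (1 + e) * P" using pos by simp
  have hP: "\<bar>c1 - c0\<bar> * P \<le> 2 * e * m"
  proof -
    have "\<bar>c1 - c0\<bar> * P = \<bar>c1 * P - c0 * P\<bar>" using pos by (simp add: left_diff_distrib[symmetric] abs_mult)
    thus ?thesis using h0 h1 by linarith
  qed
  have "(1 - e) * (\<bar>c1 - c0\<bar> * x) = \<bar>c1 - c0\<bar> * ((1 - e) * x)" by simp
  also have "\<dots> \<le> \<bar>c1 - c0\<bar> * ((1 + e) * P)" using hx by (intro mult_left_mono) auto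
  also have "\<dots> = (1 + e) * (\<bar>c1 - c0\<bar> * P)" by simp
  also have "\<dots> \<le> (1 + e) * (2 * e * m)" using hP pos by (intro mult_left_mono) auto
  finally have hA: "(1 - e) * (\<bar>c1 - c0\<bar> * x) \<le> (1 + e) * (2 * e * m)" .
  have hB: "\<bar>c3 - c1\<bar> * x \<le> 2 * e * m"
  proof -
    have "\<bar>c3 - c1\<bar> * x = \<bar>c3 * x - c1 * x\<bar>" using pos by (simp add: left_diff_distrib[symmetric] abs_mult)
    thus ?thesis using h2 h3 by linarith
  qed
  have "\<bar>c3 - c0\<bar> * z \<le> \<bar>c3 - c0\<bar> * x" using zx by (intro mult_left_mono) auto
  also have "\<dots> \<le> \<bar>c3 - c1\<bar> * x + \<bar>c1 - c0\<bar> * x"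
    using abs_triangle_ineq[of "c3 - c1" "c1 - c0"] pos by (simp add: distrib_right[symmetric] mult_right_mono)
  finally have hC: "\<bar>c3 - c0\<bar> * z \<le> \<bar>c3 - c1\<bar> * x + \<bar>c1 - c0\<bar> * x" .
  have hD: "\<bar>w - c0 * z\<bar> \<le> \<bar>w - c3 * z\<bar> + \<bar>c3 - c0\<bar> * z"
  proof -
    have "\<bar>c3 - c0\<bar> * z = \<bar>c3 * z - c0 * z\<bar>" using pos by (simp add: left_diff_distrib[symmetric] abs_mult)
    thus ?thesis by linarith
  qed
  have "(1 - e) * \<bar>w - c0 * z\<bar> \<le> (1 - e) * (e * m + 2 * e * m) + (1 - e) * (\<bar>c1 - c0\<bar> * x)"
  proof -
    have "\<bar>w - c0 * z\<bar> \<le> e * m + 2 * e * m + \<bar>c1 - c0\<bar> * x" using hB hC hD h4 by linarith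
    hence "(1 - e) * \<bar>w - c0 * z\<bar> \<le> (1 - e) * (e * m + 2 * e * m + \<bar>c1 - c0\<bar> * x)"
      using pos by (intro mult_left_mono) auto
    thus ?thesis by (simp add: algebra_simps)
  qed
  also have "\<dots> \<le> (1 - e) * (e * m + 2 * e * m) + (1 + e) * (2 * e * m)" using hA by linarith
  also have "\<dots> \<le> 6 * e * m"
  proof -
    have "e * (e * m) \<ge> 0" using pos by simp
    thus ?thesis using pos by (simp add: algebra_simps)
  qed
  also have "\<dots> \<le> (1 - e) * (\<epsilon> * m)"
  proof -
    have "\<epsilon> * e \<le> \<epsilon> * (1/2)" using pos by (intro mult_left_mono) auto
    moreover have "(1 - e) * \<epsilon> = \<epsilon> - \<epsilon> * e" by (simp add: algebra_simps)
    ultimately have "6 * e \<le> (1 - e) * \<epsilon>" using pos by linarith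
    thus ?thesis using pos by (metis mult.assoc mult_right_mono)
  qed
  finally show ?thesis using pos by simp
qed

lemma emeas_fin:
  assumes "emeas M A \<noteq> \<infinity>"
  shows "emeas M A = ereal (measure M A)"
proof -
  have "emeasure M A \<noteq> top" using assms by (simp add: emeas_def)
  thus ?thesis by (simp add: emeas_def emeasure_eq_ennreal_measure)
qed

lemma ereal_bound_fin:
  fixes X :: ereal
  assumes "c > 0" "\<bar>ereal a - ereal c * X\<bar> \<le> ereal r" "X \<ge> 0"
  shows "X \<noteq> \<infinity>"
proof
  assume "X = \<infinity>"
  hence "\<bar>ereal a - ereal c * X\<bar> = \<infinity>" using assms(1) by simp
  thus False using assms(2) by simp
qed

lemma emeas_nonneg: "emeas M A \<ge> 0"
  by (simp add: emeas_def)

lemma conf_real: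
  assumes conf: "conformal_hom M N \<phi>" and ep: "\<epsilon> > 0"
  obtains \<delta> where "\<delta> > 0" "\<And>U V. U \<in> sets M \<Longrightarrow> V \<in> sets M \<Longrightarrow> emeas M U \<le> ereal \<delta> \<Longrightarrow> emeas M V \<le> ereal \<delta> \<Longrightarrow>
     \<exists>c>0. \<bar>measure M U - c * measure N (\<phi> U)\<bar> \<le> \<epsilon> * max (measure M U) (measure M V) \<and>
           \<bar>measure M V - c * measure N (\<phi> V)\<bar> \<le> \<epsilon> * max (measure M U) (measure M V) \<and>
           \<bar>measure M (U \<inter> V) - c * measure N (\<phi> U \<inter> \<phi> V)\<bar> \<le> \<epsilon> * max (measure M U) (measure M V) \<and>
           measure N (\<phi> U \<inter> \<phi> V) \<le> measure N (\<phi> U) \<and>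
           emeas M (U \<inter> V) = ereal (measure M (U \<inter> V)) \<and>
           emeas N (\<phi> U \<inter> \<phi> V) = ereal (measure N (\<phi> U \<inter> \<phi> V))"
proof -
  have sets: "\<And>U. U \<in> sets M \<Longrightarrow> \<phi> U \<in> sets N" using conf by (simp add: conformal_hom_def)
  have all: "\<forall>\<epsilon>::real>0. \<exists>\<delta>::real>0. \<forall>U\<in>sets M. \<forall>V\<in>sets M.
        emeas M U \<le> ereal \<delta> \<longrightarrow> emeas M V \<le> ereal \<delta> \<longrightarrow>
        (\<exists>c::real>0.
           \<bar>emeas M U - ereal c * emeas N (\<phi> U)\<bar> \<le> ereal \<epsilon> * max (emeas M U) (emeas M V) \<and>
           \<bar>emeas M V - ereal c * emeas N (\<phi> V)\<bar> \<le> ereal \<epsilon> * max (emeas M U) (emeas M V) \<and>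
           \<bar>emeas M (U \<inter> V) - ereal c * emeas N (\<phi> U \<inter> \<phi> V)\<bar>
              \<le> ereal \<epsilon> * max (emeas M U) (emeas M V))"
    using conf unfolding conformal_hom_def by (rule conjunct2)
  obtain \<delta> where d: "\<delta> > 0" and H0: "\<forall>U\<in>sets M. \<forall>V\<in>sets M.
        emeas M U \<le> ereal \<delta> \<longrightarrow> emeas M V \<le> ereal \<delta> \<longrightarrow>
        (\<exists>c::real>0.
           \<bar>emeas M U - ereal c * emeas N (\<phi> U)\<bar> \<le> ereal \<epsilon> * max (emeas M U) (emeas M V) \<and>
           \<bar>emeas M V - ereal c * emeas N (\<phi> V)\<bar> \<le> ereal \<epsilon> * max (emeas M U) (emeas M V) \<and>
           \<bar>emeas M (U \<inter> V) - ereal c * emeas N (\<phi> U \<inter> \<phi> V)\<bar>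
              \<le> ereal \<epsilon> * max (emeas M U) (emeas M V))"
    using all ep by blast
  note H = H0[rule_format]
  show ?thesis
  proof (rule that[OF d])
    fix U V assume U: "U \<in> sets M" and V: "V \<in> sets M" and dU: "emeas M U \<le> ereal \<delta>" and dV: "emeas M V \<le> ereal \<delta>"
    obtain c where c: "c > 0"
      and b1: "\<bar>emeas M U - ereal c * emeas N (\<phi> U)\<bar> \<le> ereal \<epsilon> * max (emeas M U) (emeas M V)"
      and b2: "\<bar>emeas M V - ereal c * emeas N (\<phi> V)\<bar> \<le> ereal \<epsilon> * max (emeas M U) (emeas M V)"
      and b3: "\<bar>emeas M (U \<inter> V) - ereal c * emeas N (\<phi> U \<inter> \<phi> V)\<bar> \<le> ereal \<epsilon> * max (emeas M U) (emeas M V)"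
      using H[OF U V dU dV] by blast
    have eU: "emeas M U = ereal (measure M U)" using dU by (intro emeas_fin) auto
    have eV: "emeas M V = ereal (measure M V)" using dV by (intro emeas_fin) auto
    have UVsub: "U \<inter> V \<subseteq> U" by auto
    have "emeasure M (U \<inter> V) \<le> emeasure M U" using U by (intro emeasure_mono) auto
    hence "emeas M (U \<inter> V) \<le> emeas M U" by (simp add: emeas_def less_eq_ennreal.rep_eq)
    hence eUV: "emeas M (U \<inter> V) = ereal (measure M (U \<inter> V))" using eU by (intro emeas_fin) auto
    define r where "r = \<epsilon> * max (measure M U) (measure M V)"
    have rr: "ereal \<epsilon> * max (emeas M U) (emeas M V) = ereal r" unfolding r_def eU eV by (cases "measure M U \<le> measure M V") (auto simp: max_def)
    have fU: "emeas N (\<phi> U) \<noteq> \<infinity>"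
      using ereal_bound_fin[OF c, of "measure M U" "emeas N (\<phi> U)" r] b1 rr eU emeas_nonneg by metis
    have fV: "emeas N (\<phi> V) \<noteq> \<infinity>"
      using ereal_bound_fin[OF c, of "measure M V" "emeas N (\<phi> V)" r] b2 rr eV emeas_nonneg by metis
    have nU: "emeas N (\<phi> U) = ereal (measure N (\<phi> U))" using fU by (rule emeas_fin)
    have nV: "emeas N (\<phi> V) = ereal (measure N (\<phi> V))" using fV by (rule emeas_fin)
    have "emeasure N (\<phi> U \<inter> \<phi> V) \<le> emeasure N (\<phi> U)" using sets[OF U] by (intro emeasure_mono) auto
    hence "emeas N (\<phi> U \<inter> \<phi> V) \<le> emeas N (\<phi> U)" by (simp add: emeas_def less_eq_ennreal.rep_eq)
    hence nUV: "emeas N (\<phi> U \<inter> \<phi> V) = ereal (measure N (\<phi> U \<inter> \<phi> V))" using fU by (intro emeas_fin) auto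
    have "emeasure N (\<phi> U) < \<infinity>" using fU by (simp add: emeas_def less_top)
    hence mono: "measure N (\<phi> U \<inter> \<phi> V) \<le> measure N (\<phi> U)"
      using sets[OF U] sets[OF V] by (intro measure_mono_fmeasurable fmeasurableI) auto
    show "\<exists>c>0. \<bar>measure M U - c * measure N (\<phi> U)\<bar> \<le> \<epsilon> * max (measure M U) (measure M V) \<and>
           \<bar>measure M V - c * measure N (\<phi> V)\<bar> \<le> \<epsilon> * max (measure M U) (measure M V) \<and>
           \<bar>measure M (U \<inter> V) - c * measure N (\<phi> U \<inter> \<phi> V)\<bar> \<le> \<epsilon> * max (measure M U) (measure M V) \<and>
           measure N (\<phi> U \<inter> \<phi> V) \<le> measure N (\<phi> U) \<and>
           emeas M (U \<inter> V) = ereal (measure M (U \<inter> V)) \<and>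
           emeas N (\<phi> U \<inter> \<phi> V) = ereal (measure N (\<phi> U \<inter> \<phi> V))"
      using c b1 b2 b3 rr mono eUV nUV unfolding eU eV nU nV eUV nUV r_def by auto
  qed
qed


theorem lemma4p3:
  fixes M :: "'a measure" and N :: "'b measure" and \<phi> :: "'a set \<Rightarrow> 'b set"
  assumes "sigma_finite_measure M" and "sigma_finite_measure N"
    and "conformal_hom M N \<phi>"
  shows "\<forall>k::nat. \<forall>\<epsilon>::real>0. \<exists>\<delta>::real>0. \<forall>A :: nat \<Rightarrow> 'a set.
           (\<forall>i\<in>{1..k}. A i \<in> sets M \<and> emeas M (A i) \<le> ereal \<delta>) \<longrightarrow>
           (\<exists>c::real>0. \<forall>i\<in>{1..k}. \<forall>j\<in>{1..k}.
              \<bar>emeas M (A i \<inter> A j) - ereal c * emeas N (\<phi> (A i) \<inter> \<phi> (A j))\<bar>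
                \<le> ereal \<epsilon> * Max ((\<lambda>l. emeas M (A l)) ` {1..k}))"
proof (intro allI impI)
  fix k :: nat and \<epsilon> :: real
  assume ep: "\<epsilon> > 0"
  define e where "e = min (\<epsilon>/20) (1/2)"
  have e: "e > 0" "e \<le> \<epsilon>/20" "e \<le> 1/2" using ep unfolding e_def by auto
  obtain \<delta> where d: "\<delta> > 0" and R: "\<And>U V. U \<in> sets M \<Longrightarrow> V \<in> sets M \<Longrightarrow> emeas M U \<le> ereal \<delta> \<Longrightarrow> emeas M V \<le> ereal \<delta> \<Longrightarrow>
     \<exists>c>0. \<bar>measure M U - c * measure N (\<phi> U)\<bar> \<le> e * max (measure M U) (measure M V) \<and>
           \<bar>measure M V - c * measure N (\<phi> V)\<bar> \<le> e * max (measure M U) (measure M V) \<and>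
           \<bar>measure M (U \<inter> V) - c * measure N (\<phi> U \<inter> \<phi> V)\<bar> \<le> e * max (measure M U) (measure M V) \<and>
           measure N (\<phi> U \<inter> \<phi> V) \<le> measure N (\<phi> U) \<and>
           emeas M (U \<inter> V) = ereal (measure M (U \<inter> V)) \<and>
           emeas N (\<phi> U \<inter> \<phi> V) = ereal (measure N (\<phi> U \<inter> \<phi> V))"
    using conf_real[OF assms(3) e(1)] by blast
  show "\<exists>\<delta>::real>0. \<forall>A :: nat \<Rightarrow> 'a set.
           (\<forall>i\<in>{1..k}. A i \<in> sets M \<and> emeas M (A i) \<le> ereal \<delta>) \<longrightarrow>
           (\<exists>c::real>0. \<forall>i\<in>{1..k}. \<forall>j\<in>{1..k}.
              \<bar>emeas M (A i \<inter> A j) - ereal c * emeas N (\<phi> (A i) \<inter> \<phi> (A j))\<bar>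
                \<le> ereal \<epsilon> * Max ((\<lambda>l. emeas M (A l)) ` {1..k}))"
  proof (rule exI[of _ \<delta>], intro conjI allI impI d)
    fix A :: "nat \<Rightarrow> 'a set"
    assume HA: "\<forall>i\<in>{1..k}. A i \<in> sets M \<and> emeas M (A i) \<le> ereal \<delta>"
    show "\<exists>c::real>0. \<forall>i\<in>{1..k}. \<forall>j\<in>{1..k}.
              \<bar>emeas M (A i \<inter> A j) - ereal c * emeas N (\<phi> (A i) \<inter> \<phi> (A j))\<bar>
                \<le> ereal \<epsilon> * Max ((\<lambda>l. emeas M (A l)) ` {1..k})"
    proof (cases "k = 0")
      case True
      then show ?thesis by (intro exI[of _ 1]) auto
    next
      case False
      let ?S = "(\<lambda>l. emeas M (A l)) ` {1..k}"
      have fin: "finite ?S" by simp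
      have ne: "?S \<noteq> {}" using False by simp
      have "Max ?S \<in> ?S" using fin ne by (rule Max_in)
      then obtain p where p: "p \<in> {1..k}" "Max ?S = emeas M (A p)" by auto
      have Ap: "A p \<in> sets M" "emeas M (A p) \<le> ereal \<delta>" using HA p(1) by auto
      have fine: "\<And>l. l \<in> {1..k} \<Longrightarrow> emeas M (A l) = ereal (measure M (A l))"
      proof -
        fix l assume l: "l \<in> {1..k}"
        have "emeas M (A l) \<le> ereal \<delta>" using HA l by auto
        hence "emeas M (A l) \<noteq> \<infinity>" by auto
        thus "emeas M (A l) = ereal (measure M (A l))" by (rule emeas_fin)
      qed
      have mle: "\<And>l. l \<in> {1..k} \<Longrightarrow> measure M (A l) \<le> measure M (A p)"
      proof -
        fix l assume l: "l \<in> {1..k}"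
        have "emeas M (A l) \<le> Max ?S" using fin l by (intro Max_ge) auto
        thus "measure M (A l) \<le> measure M (A p)" using fine[OF l] fine[OF p(1)] p(2) by simp
      qed
      obtain c0 where c0: "c0 > 0"
        and h0: "\<bar>measure M (A p) - c0 * measure N (\<phi> (A p))\<bar> \<le> e * max (measure M (A p)) (measure M (A p))"
        using R[OF Ap(1) Ap(1) Ap(2) Ap(2)] by blast
      show ?thesis
      proof (intro exI[of _ c0] conjI ballI c0)
        fix i j assume i: "i \<in> {1..k}" and j: "j \<in> {1..k}"
        have Ai: "A i \<in> sets M" "emeas M (A i) \<le> ereal \<delta>" using HA i by auto
        have Aj: "A j \<in> sets M" "emeas M (A j) \<le> ereal \<delta>" using HA j by auto
        obtain c1 where c1: "c1 > 0"
          and h1: "\<bar>measure M (A p) - c1 * measure N (\<phi> (A p))\<bar> \<le> e * max (measure M (A p)) (measure M (A i))"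
          and h2: "\<bar>measure M (A i) - c1 * measure N (\<phi> (A i))\<bar> \<le> e * max (measure M (A p)) (measure M (A i))"
          using R[OF Ap(1) Ai(1) Ap(2) Ai(2)] by blast
        obtain c3 where
              h3: "\<bar>measure M (A i) - c3 * measure N (\<phi> (A i))\<bar> \<le> e * max (measure M (A i)) (measure M (A j))"
          and h4: "\<bar>measure M (A i \<inter> A j) - c3 * measure N (\<phi> (A i) \<inter> \<phi> (A j))\<bar> \<le> e * max (measure M (A i)) (measure M (A j))"
          and zx: "measure N (\<phi> (A i) \<inter> \<phi> (A j)) \<le> measure N (\<phi> (A i))"
          and eUV: "emeas M (A i \<inter> A j) = ereal (measure M (A i \<inter> A j))"
          and nUV: "emeas N (\<phi> (A i) \<inter> \<phi> (A j)) = ereal (measure N (\<phi> (A i) \<inter> \<phi> (A j)))"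
          using R[OF Ai(1) Aj(1) Ai(2) Aj(2)] by blast
        have mx1: "max (measure M (A p)) (measure M (A p)) = measure M (A p)" by simp
        have mx2: "max (measure M (A p)) (measure M (A i)) = measure M (A p)" using mle[OF i] by simp
        have "e * max (measure M (A i)) (measure M (A j)) \<le> e * measure M (A p)"
          using mle[OF i] mle[OF j] e by (intro mult_left_mono) auto
        hence h3': "\<bar>measure M (A i) - c3 * measure N (\<phi> (A i))\<bar> \<le> e * measure M (A p)"
          and h4': "\<bar>measure M (A i \<inter> A j) - c3 * measure N (\<phi> (A i) \<inter> \<phi> (A j))\<bar> \<le> e * measure M (A p)"
          using h3 h4 by linarith+
        have key: "\<bar>measure M (A i \<inter> A j) - c0 * measure N (\<phi> (A i) \<inter> \<phi> (A j))\<bar> \<le> \<epsilon> * measure M (A p)"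
          using h0[unfolded mx1] h1[unfolded mx2] h2[unfolded mx2] h3' h4' zx mle[OF i] e c1
          by (intro core[of "measure M (A p)" "measure N (\<phi> (A i))" "measure N (\<phi> (A i) \<inter> \<phi> (A j))"
                "measure N (\<phi> (A p))" c1 e \<epsilon> "measure M (A i)" c0 c3]) auto
        show "\<bar>emeas M (A i \<inter> A j) - ereal c0 * emeas N (\<phi> (A i) \<inter> \<phi> (A j))\<bar>
                \<le> ereal \<epsilon> * Max ((\<lambda>l. emeas M (A l)) ` {1..k})"
          unfolding eUV nUV p(2) fine[OF p(1)] using key by simp
      qed
    qed
  qed
qed

end
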